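(* There exists an absolute constant $c_0>0$ such that the following holds. Let $n\ge2$ and $A=\mathrm{diag}(\lambda_1,\dots,\lambda_n)$ with $\lambda_1>\lambda_2\ge\dots\ge\lambda_n$, real, and suppose Assumption 1 (context) holds with constant $c_0$. Let $$E=\begin{pmatrix}0&g^T\\ g&0\end{pmatrix},$$ where $g\sim N(0,I_{n-1})$ is a standard Gaussian vector in $\mathbb{R}^{n-1}$, and let $\tilde u_1$ be a unit leading eigenvector of $\tilde A=A+E$. Then with probability $1-O(n^{-2})$, $$|\langle\tilde u_1,e_{j+1}\rangle|\ge\frac{|g_j|}{4(\lambda_1-\lambda_{j+1})}\qquad\text{for all }1\le j\le n-1,$$ where $e_1,\dots,e_n$ is the standard basis. As a consequence, with probability $1-O(n^{-2})$, $\max_{1\le j\le n-1}(\lambda_1-\lambda_{j+1})|\langle\tilde u_1,e_{j+1}\rangle|\ge c\sqrt{\log n}$ for an absolute constant $c>0$.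
   Context: Let $d(\lambda)\in\mathbb{R}^{n-1}$, $[d(\lambda)]_j=1/(\lambda_1-\lambda_{j+1})$; $\|\cdot\|_{p/(p-2)}$ means $\|\cdot\|_\infty$ when $p=2$. Assumption 1 (with constant $c_0$): either (1) there exists $p\in[2,\infty)$ with $\sqrt{p\log n}\,n^{1/p}\|d(\lambda)\|_{p/(p-2)}\le c_0$, or (2) $\log n\,\|d(\lambda)\|_1\le c_0$. *)

theory Defs
  imports "HOL-Probability.Probability"
begin

text \<open>Conventions: all vectors/matrices are 0-indexed functions on nat.
  Paper index i (1..n) corresponds to index i-1 here. So lam 0 = lambda_1,
  lam j = lambda_{j+1}; the Gaussian vector g has entries g 0 .. g (n-2).\<close>

definition dvec :: "(nat \<Rightarrow> real) \<Rightarrow> nat \<Rightarrow> real" where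
  "dvec lam j = 1 / (lam 0 - lam j)"   \<comment> \<open>entry for paper index j, j = 1..n-1\<close>

definition dnorm :: "nat \<Rightarrow> (nat \<Rightarrow> real) \<Rightarrow> real \<Rightarrow> real" where
  "dnorm n lam p =
     (if p = 2 then Max ((\<lambda>j. \<bar>dvec lam j\<bar>) ` {1..n-1})
      else (\<Sum>j\<in>{1..n-1}. \<bar>dvec lam j\<bar> powr (p / (p - 2))) powr ((p - 2) / p))"

definition assumption1 :: "real \<Rightarrow> nat \<Rightarrow> (nat \<Rightarrow> real) \<Rightarrow> bool" where
  "assumption1 c0 n lam \<longleftrightarrow>
     (\<exists>p::real. 2 \<le> p \<and> sqrt (p * ln (real n)) * (real n) powr (1 / p) * dnorm n lam p \<le> c0)
     \<or> ln (real n) * (\<Sum>j\<in>{1..n-1}. \<bar>dvec lam j\<bar>) \<le> c0"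

definition pert_mat :: "(nat \<Rightarrow> real) \<Rightarrow> (nat \<Rightarrow> real) \<Rightarrow> nat \<Rightarrow> nat \<Rightarrow> real" where
  "pert_mat lam g i k =
     (if i = k then lam i else 0)
     + (if i = 0 \<and> k \<ge> 1 then g (k - 1) else 0)
     + (if k = 0 \<and> i \<ge> 1 then g (i - 1) else 0)"

definition is_eigenpair :: "nat \<Rightarrow> (nat \<Rightarrow> nat \<Rightarrow> real) \<Rightarrow> real \<Rightarrow> (nat \<Rightarrow> real) \<Rightarrow> bool" where
  "is_eigenpair n M mu v \<longleftrightarrow>
     (\<forall>i<n. (\<Sum>k<n. M i k * v k) = mu * v i) \<and> (\<exists>i<n. v i \<noteq> 0)"

definition unit_leading_eigvec :: "nat \<Rightarrow> (nat \<Rightarrow> nat \<Rightarrow> real) \<Rightarrow> (nat \<Rightarrow> real) \<Rightarrow> bool" where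
  "unit_leading_eigvec n M u \<longleftrightarrow>
     (\<Sum>i<n. (u i)\<^sup>2) = 1 \<and>
     (\<exists>mu. is_eigenpair n M mu u \<and> (\<forall>mu' v. is_eigenpair n M mu' v \<longrightarrow> mu' \<le> mu))"

definition gauss_vec :: "nat \<Rightarrow> (nat \<Rightarrow> real) measure" where
  "gauss_vec m = PiM {..<m} (\<lambda>_. density lborel std_normal_density)"

end

theory Submission
  imports Defs
begin



lemma row0:
  assumes "n \<ge> 1"
  shows "(\<Sum>k<n. pert_mat lam g 0 k * v k) = lam 0 * v 0 + (\<Sum>k\<in>{1..<n}. g (k-1) * v k)"
proof -
  have "(\<Sum>k<n. pert_mat lam g 0 k * v k) = (\<Sum>k<n. (if k = 0 then lam 0 * v 0 else 0) + (if 1 \<le> k then g (k-1) * v k else 0))"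
    by (rule sum.cong) (auto simp: pert_mat_def not_le)
  also have "\<dots> = lam 0 * v 0 + (\<Sum>k<n. (if 1 \<le> k then g (k-1) * v k else 0))"
    using assms by (simp add: sum.distrib)
  also have "(\<Sum>k<n. (if 1 \<le> k then g (k-1) * v k else 0)) = (\<Sum>k\<in>{1..<n}. g (k-1) * v k)"
    by (subst sum.inter_filter[symmetric]) (auto intro: sum.cong)
  finally show ?thesis .
qed

lemma rowi:
  assumes "1 \<le> i" "i < n"
  shows "(\<Sum>k<n. pert_mat lam g i k * v k) = g (i-1) * v 0 + lam i * v i"
proof -
  have "(\<Sum>k<n. pert_mat lam g i k * v k) = (\<Sum>k<n. (if k = i then lam i * v i else 0) + (if k = 0 then g (i-1) * v 0 else 0))"
    by (rule sum.cong) (use assms in \<open>auto simp: pert_mat_def\<close>)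
  also have "\<dots> = g (i-1) * v 0 + lam i * v i"
    using assms by (simp add: sum.distrib)
  finally show ?thesis .
qed

lemma split0:
  fixes n :: nat
  assumes "n \<ge> 1"
  shows "(\<Sum>k<n. f k) = f 0 + (\<Sum>k\<in>{1..<n}. (f k :: real))"
proof -
  have e: "{..<n} = insert 0 {1..<n}" using assms by (auto simp: not_le)
  show ?thesis by (subst e) simp
qed




lemma determ:
  fixes n :: nat and lam g u :: "nat \<Rightarrow> real"
  assumes n2: "n \<ge> 2" and l01: "lam 0 > lam 1"
    and mono: "\<forall>i j. 1 \<le> i \<and> i \<le> j \<and> j < n \<longrightarrow> lam j \<le> lam i"
    and H: "(\<Sum>j\<in>{1..<n}. (g (j-1))\<^sup>2 / (lam 0 - lam j)) \<le> lam 0 - lam 1"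
    and U: "unit_leading_eigvec n (pert_mat lam g) u"
  shows "\<forall>j\<in>{1..n-1}. \<bar>u j\<bar> \<ge> \<bar>g (j-1)\<bar> / (4*(lam 0 - lam j))"
proof
  fix j assume jJ': "j \<in> {1..n-1}"
  define J where "J = {1..<n}"
  define \<delta> where "\<delta> = lam 0 - lam 1"
  have jJ: "j \<in> J" using jJ' n2 unfolding J_def by auto
  have \<delta>pos: "\<delta> > 0" using l01 \<delta>_def by simp
  have gap: "\<And>k. k \<in> J \<Longrightarrow> \<delta> \<le> lam 0 - lam k"
    using mono unfolding J_def \<delta>_def by auto
  have gappos: "\<And>k. k \<in> J \<Longrightarrow> 0 < lam 0 - lam k"
    using gap \<delta>pos by (meson less_le_trans)
  define \<sigma> where "\<sigma> = (\<Sum>k\<in>J. (g (k-1))\<^sup>2 / (lam 0 - lam k))"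
  have H': "\<sigma> \<le> \<delta>" using H unfolding \<sigma>_def J_def \<delta>_def .
  have n1: "n \<ge> 1" using n2 by simp
  from U obtain mu where unit: "(\<Sum>i<n. (u i)\<^sup>2) = 1"
    and ev: "is_eigenpair n (pert_mat lam g) mu u"
    and top: "\<And>mu' v. is_eigenpair n (pert_mat lam g) mu' v \<Longrightarrow> mu' \<le> mu"
    unfolding unit_leading_eigvec_def by blast
  show "\<bar>u j\<bar> \<ge> \<bar>g (j-1)\<bar> / (4*(lam 0 - lam j))"
  proof (cases "\<forall>k\<in>J. g (k-1) = 0")
    case True
    then show ?thesis using jJ by simp
  next
    case False
    then obtain k0 where k0: "k0 \<in> J" "g (k0-1) \<noteq> 0" by blast
    have \<sigma>pos: "\<sigma> > 0" unfolding \<sigma>_def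
      apply (rule sum_pos2[OF _ k0(1)])
      using k0 gappos unfolding J_def by (auto intro!: divide_nonneg_nonneg) (meson atLeastLessThan_iff less_imp_le)
    define f where "f x = x - lam 0 - (\<Sum>k\<in>J. (g (k-1))\<^sup>2 / (x - lam k))" for x
    have cont: "continuous_on {lam 0..lam 0 + \<sigma>} f"
      unfolding f_def
      apply (intro continuous_intros)
      using gappos by fastforce
    have fa: "f (lam 0) = - \<sigma>" unfolding f_def \<sigma>_def by simp
    have "(\<Sum>k\<in>J. (g (k-1))\<^sup>2 / (lam 0 + \<sigma> - lam k)) \<le> (\<Sum>k\<in>J. (g (k-1))\<^sup>2 / (lam 0 - lam k))"
    proof (rule sum_mono)
      fix k assume "k \<in> J"
      then show "(g (k-1))\<^sup>2 / (lam 0 + \<sigma> - lam k) \<le> (g (k-1))\<^sup>2 / (lam 0 - lam k)"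
        using gappos[of k] \<sigma>pos by (intro divide_left_mono mult_pos_pos) auto
    qed
    then have fb: "f (lam 0 + \<sigma>) \<ge> 0" unfolding f_def \<sigma>_def[symmetric] by simp
    obtain x where x: "lam 0 \<le> x" "x \<le> lam 0 + \<sigma>" "f x = 0"
      using IVT'[of f "lam 0" 0 "lam 0 + \<sigma>"] fa fb \<sigma>pos cont by auto
    have xgt: "x > lam 0" using x fa \<sigma>pos by (cases "x = lam 0") auto
    define v where "v k = (if k = 0 then 1 else g (k-1) / (x - lam k))" for k
    have xne: "\<And>k. k \<in> J \<Longrightarrow> x - lam k \<noteq> 0" using gappos xgt by force
    have "is_eigenpair n (pert_mat lam g) x v"
      unfolding is_eigenpair_def
    proof (intro conjI allI impI)
      fix i assume i: "i < n"
      show "(\<Sum>k<n. pert_mat lam g i k * v k) = x * v i"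
      proof (cases "i = 0")
        case True
        have "(\<Sum>k\<in>{1..<n}. g (k-1) * v k) = (\<Sum>k\<in>J. (g (k-1))\<^sup>2 / (x - lam k))"
          unfolding J_def by (rule sum.cong) (auto simp: v_def power2_eq_square)
        then show ?thesis using True row0[OF n1, of lam g v] x(3) unfolding f_def
          by (simp add: v_def)
      next
        case False
        then have iJ: "i \<in> J" using i unfolding J_def by auto
        have "g (i-1) * v 0 + lam i * v i = x * v i"
          using xne[OF iJ] False by (simp add: v_def field_simps)
        then show ?thesis using rowi[of i n lam g v] False i by simp
      qed
    next
      show "\<exists>i<n. v i \<noteq> 0" using n1 by (intro exI[of _ 0]) (auto simp: v_def)
    qed
    then have "x \<le> mu" by (rule top)
    then have mugt: "mu > lam 0" using xgt by simp
    have mune: "\<And>k. k \<in> J \<Longrightarrow> mu - lam k > 0" using gappos mugt by force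
    have eqs: "\<And>i. i < n \<Longrightarrow> (\<Sum>k<n. pert_mat lam g i k * u k) = mu * u i"
      using ev unfolding is_eigenpair_def by blast
    have uk: "\<And>k. k \<in> J \<Longrightarrow> u k = g (k-1) * u 0 / (mu - lam k)"
    proof -
      fix k assume kJ: "k \<in> J"
      then have "g (k-1) * u 0 + lam k * u k = mu * u k"
        using eqs[of k] rowi[of k n lam g u] unfolding J_def by auto
      then show "u k = g (k-1) * u 0 / (mu - lam k)"
        using mune[OF kJ] by (simp add: field_simps)
    qed
    define \<tau> where "\<tau> = (\<Sum>k\<in>J. (g (k-1))\<^sup>2 / (mu - lam k))"
    have "lam 0 * u 0 + (\<Sum>k\<in>J. g (k-1) * u k) = mu * u 0"
      using eqs[of 0] row0[OF n1, of lam g u] n1 unfolding J_def by simp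
    moreover have "(\<Sum>k\<in>J. g (k-1) * u k) = u 0 * \<tau>"
      unfolding \<tau>_def sum_distrib_left
    proof (rule sum.cong)
      fix k assume kJ: "k \<in> J"
      show "g (k-1) * u k = u 0 * ((g (k-1))\<^sup>2 / (mu - lam k))"
        using uk[OF kJ] by (simp add: power2_eq_square)
    qed simp
    ultimately have r0: "(mu - lam 0) * u 0 = u 0 * \<tau>" by (simp add: algebra_simps)
    have u0ne: "u 0 \<noteq> 0"
    proof
      assume u0: "u 0 = 0"
      have "\<And>i. i < n \<Longrightarrow> u i = 0"
      proof -
        fix i assume "i < n"
        then show "u i = 0" using u0 uk[of i] unfolding J_def by (cases "i = 0") auto
      qed
      then have "(\<Sum>i<n. (u i)\<^sup>2) = 0" by simp
      then show False using unit by simp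
    qed
    have \<tau>eq: "mu - lam 0 = \<tau>" using r0 u0ne by simp
    have "\<tau> \<le> \<sigma>" unfolding \<tau>_def \<sigma>_def
    proof (rule sum_mono)
      fix k assume "k \<in> J"
      then show "(g (k-1))\<^sup>2 / (mu - lam k) \<le> (g (k-1))\<^sup>2 / (lam 0 - lam k)"
        using gappos[of k] mugt by (intro divide_left_mono) auto
    qed
    then have mule: "mu - lam 0 \<le> \<delta>" using \<tau>eq H' by simp
    define \<rho> where "\<rho> = (\<Sum>k\<in>J. (g (k-1))\<^sup>2 / (mu - lam k)\<^sup>2)"
    have "\<rho> \<le> (\<Sum>k\<in>J. (g (k-1))\<^sup>2 / (lam 0 - lam k) / \<delta>)" unfolding \<rho>_def
    proof (rule sum_mono)
      fix k assume kJ: "k \<in> J"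
      have le: "(lam 0 - lam k) * \<delta> \<le> (mu - lam k)\<^sup>2"
        using gap[OF kJ] gappos[OF kJ] mugt \<delta>pos unfolding power2_eq_square
        by (intro mult_mono) auto
      have p: "0 < (lam 0 - lam k) * \<delta>" using gappos[OF kJ] \<delta>pos by simp
      have "(g (k-1))\<^sup>2 / (mu - lam k)\<^sup>2 \<le> (g (k-1))\<^sup>2 / ((lam 0 - lam k) * \<delta>)"
        using p less_le_trans[OF p le] gappos[OF kJ] \<delta>pos by (intro divide_left_mono[OF le] mult_pos_pos) auto
      then show "(g (k-1))\<^sup>2 / (mu - lam k)\<^sup>2 \<le> (g (k-1))\<^sup>2 / (lam 0 - lam k) / \<delta>"
        by (simp add: divide_divide_eq_left)
    qed
    also have "\<dots> = \<sigma> / \<delta>" unfolding \<sigma>_def by (simp add: sum_divide_distrib)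
    also have "\<dots> \<le> 1" using H' \<delta>pos by simp
    finally have \<rho>le: "\<rho> \<le> 1" .
    have "1 = (u 0)\<^sup>2 + (\<Sum>k\<in>J. (u k)\<^sup>2)"
      using unit split0[OF n1, of "\<lambda>i. (u i)\<^sup>2"] unfolding J_def by simp
    also have "(\<Sum>k\<in>J. (u k)\<^sup>2) = (u 0)\<^sup>2 * \<rho>"
      unfolding \<rho>_def sum_distrib_left
    proof (rule sum.cong)
      fix k assume kJ: "k \<in> J"
      show "(u k)\<^sup>2 = (u 0)\<^sup>2 * ((g (k-1))\<^sup>2 / (mu - lam k)\<^sup>2)"
        using uk[OF kJ] by (simp add: power_divide power_mult_distrib)
    qed simp
    finally have "1 = (u 0)\<^sup>2 * (1 + \<rho>)" by (simp add: algebra_simps)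
    moreover have "(u 0)\<^sup>2 * (1 + \<rho>) \<le> (u 0)\<^sup>2 * 2" using \<rho>le
      by (intro mult_left_mono) auto
    ultimately have sq: "1 \<le> (u 0)\<^sup>2 * 2" by linarith
    have u0half: "\<bar>u 0\<bar> \<ge> 1/2"
    proof (rule ccontr)
      assume "\<not> \<bar>u 0\<bar> \<ge> 1/2"
      then have "\<bar>u 0\<bar> * \<bar>u 0\<bar> \<le> (1/2) * (1/2)"
        by (intro mult_mono) auto
      then have "(u 0)\<^sup>2 \<le> 1/4" by (simp add: power2_eq_square abs_mult[symmetric])
      then show False using sq by linarith
    qed
    have mj: "mu - lam j \<le> 2 * (lam 0 - lam j)" using mule gap[OF jJ] by simp
    have "\<bar>u j\<bar> = \<bar>g (j-1)\<bar> * \<bar>u 0\<bar> / (mu - lam j)"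
      using uk[OF jJ] mune[OF jJ] by (simp add: abs_mult)
    also have "\<dots> \<ge> \<bar>g (j-1)\<bar> * (1/2) / (2 * (lam 0 - lam j))"
    proof (rule frac_le)
      show "\<bar>g (j-1)\<bar> * (1/2) \<le> \<bar>g (j-1)\<bar> * \<bar>u 0\<bar>"
        using u0half by (intro mult_left_mono) auto
    qed (use mj mune[OF jJ] in auto)
    finally show ?thesis by simp
  qed
qed




abbreviation NN :: "real measure" where "NN \<equiv> density lborel std_normal_density"

lemma NN_prob: "prob_space NN"
  by (rule prob_space_normal_density) simp

lemma fact_bound: "fact (2*k) / (2^k * fact k) \<le> (real k)^k"
proof -
  have d: "fact k dvd (fact (2*k) :: nat)" by (rule fact_dvd) simp
  have "fact (2*k) div fact (2*k - k) \<le> (2*k)^k"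
    by (rule fact_div_fact_le_pow) simp
  then have "fact (2*k) div fact k \<le> (2*k)^k" by simp
  then have "fact (2*k) \<le> (2*k)^k * (fact k :: nat)"
    using d by (metis dvd_div_mult_self mult_le_mono1)
  then have "real (fact (2*k)) \<le> real ((2*k)^k * fact k)" by linarith
  then have "(fact (2*k) :: real) \<le> (2 * real k)^k * fact k"
    by (simp add: of_nat_mult)
  then have "(fact (2*k) :: real) \<le> (2^k * fact k) * (real k)^k"
    by (simp add: power_mult_distrib algebra_simps)
  then show ?thesis
    by (simp add: pos_divide_le_eq mult_ac)
qed

lemma tail_up:
  fixes T :: real and k :: nat
  assumes T: "T > 0"
  shows "measure NN {x. T < x\<^sup>2} \<le> (real k)^k / T^k"
proof -
  interpret prob_space NN by (rule NN_prob)
  have int: "integrable NN (\<lambda>x. x^(2*k))"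
    by (subst integrable_density) (auto simp: integrable_std_normal_moment)
  have ieq: "(\<integral>x. x^(2*k) \<partial>NN) = fact (2*k) / (2^k * fact k)"
    by (subst integral_density) (auto simp: integral_std_normal_moment_even)
  have Tk: "0 < T^k" using T by simp
  have "measure NN {x\<in>space NN. T^k \<le> x^(2*k)} \<le> (\<integral>x. x^(2*k) \<partial>NN) / T^k"
    by (rule integral_Markov_inequality_measure[OF int _ _ Tk, of UNIV]) auto
  also have "\<dots> = fact (2*k) / (2^k * fact k) / T^k" by (simp only: ieq)
  also have "\<dots> \<le> (real k)^k / T^k"
    using fact_bound[of k] Tk by (intro divide_right_mono) auto
  finally have M: "measure NN {x\<in>space NN. T^k \<le> x^(2*k)} \<le> (real k)^k / T^k" .
  have "{x. T < x\<^sup>2} \<subseteq> {x\<in>space NN. T^k \<le> x^(2*k)}"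
  proof
    fix x :: real assume "x \<in> {x. T < x\<^sup>2}"
    then have "T^k \<le> (x\<^sup>2)^k" using T by (intro power_mono) auto
    then show "x \<in> {x\<in>space NN. T^k \<le> x^(2*k)}" by (simp add: power_mult)
  qed
  then have "measure NN {x. T < x\<^sup>2} \<le> measure NN {x\<in>space NN. T^k \<le> x^(2*k)}"
    by (intro finite_measure_mono) auto
  with M show ?thesis by linarith
qed

lemma tail_low:
  fixes s :: real
  assumes s: "s \<ge> 0"
  shows "measure NN {x. s \<le> \<bar>x\<bar>} \<ge> std_normal_density (s+1)"
proof -
  interpret prob_space NN by (rule NN_prob)
  have "ennreal (std_normal_density (s+1)) = (\<integral>\<^sup>+x. ennreal (std_normal_density (s+1)) * indicator {s..s+1} x \<partial>lborel)"
    by (subst nn_integral_cmult_indicator) auto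
  also have "\<dots> \<le> (\<integral>\<^sup>+x. ennreal (std_normal_density x) * indicator {s..s+1} x \<partial>lborel)"
  proof (rule nn_integral_mono)
    fix x
    show "ennreal (std_normal_density (s+1)) * indicator {s..s+1} x \<le> ennreal (std_normal_density x) * indicator {s..s+1} x"
    proof (cases "x \<in> {s..s+1}")
      case True
      then have "x\<^sup>2 \<le> (s+1)\<^sup>2" using s by (intro power_mono) auto
      then have "std_normal_density (s+1) \<le> std_normal_density x"
        unfolding std_normal_density_def by (intro mult_left_mono) auto
      then show ?thesis using True by simp
    qed simp
  qed
  also have "\<dots> = emeasure NN {s..s+1}"
    by (subst emeasure_density) auto
  also have "\<dots> = ennreal (measure NN {s..s+1})" by (simp add: emeasure_eq_measure)
  finally have "std_normal_density (s+1) \<le> measure NN {s..s+1}"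
    by (subst (asm) ennreal_le_iff) auto
  also have "\<dots> \<le> measure NN {x. s \<le> \<bar>x\<bar>}"
    using s by (intro finite_measure_mono) auto
  finally show ?thesis .
qed

lemma measure_PiE_pow:
  assumes A: "A \<in> sets borel"
  shows "measure (PiM {..<m} (\<lambda>_. NN)) (PiE {..<m} (\<lambda>_. A)) = (measure NN A)^m"
proof -
  interpret N: prob_space NN by (rule NN_prob)
  interpret product_prob_space "\<lambda>_. NN" "{..<m}"
    by unfold_locales
  have "emeasure (PiM {..<m} (\<lambda>_. NN)) (PiE {..<m} (\<lambda>_. A)) = (\<Prod>i\<in>{..<m}. emeasure NN A)"
    using A by (intro emeasure_PiM) auto
  also have "\<dots> = (\<Prod>i\<in>{..<m}. ennreal (measure NN A))" by (simp add: N.emeasure_eq_measure)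
  also have "\<dots> = ennreal ((measure NN A)^m)" by (subst prod_ennreal) auto
  finally have "ennreal (measure (PiM {..<m} (\<lambda>_. NN)) (PiE {..<m} (\<lambda>_. A))) = ennreal ((measure NN A)^m)"
    by (simp add: P.emeasure_eq_measure)
  then show ?thesis by (subst (asm) ennreal_inj) auto
qed




lemma bern:
  fixes e :: real
  assumes "0 \<le> e" "e \<le> 1"
  shows "1 - real m * e \<le> (1 - e)^m"
proof (induction m)
  case 0 then show ?case by simp
next
  case (Suc m)
  have "(1 - e) * (1 - real m * e) \<le> (1 - e) * (1 - e)^m"
    using Suc assms by (intro mult_left_mono) auto
  moreover have "1 - real (Suc m) * e \<le> (1 - e) * (1 - real m * e)"
    using assms by (simp add: algebra_simps)
  ultimately show ?case by simp
qed

lemma power_mean: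
  fixes d :: "nat \<Rightarrow> real" and J :: "nat set"
  assumes fin: "finite J" and ne: "J \<noteq> {}" and pos: "\<And>j. j \<in> J \<Longrightarrow> d j > 0" and q: "q \<ge> 1"
  shows "(\<Sum>j\<in>J. d j) \<le> real (card J) powr (1 - 1/q) * (\<Sum>j\<in>J. d j powr q) powr (1/q)"
proof -
  define N where "N = real (card J)"
  have Npos: "N > 0" unfolding N_def using fin ne by (simp add: card_gt_0_iff)
  define A where "A = (\<Sum>j\<in>J. (1/N) * d j)"
  have "(\<Sum>j\<in>J. d j) > 0" using fin ne pos by (intro sum_pos) auto
  then have Apos: "A > 0" unfolding A_def using Npos by (simp add: sum_divide_distrib[symmetric])
  have sa: "(\<Sum>j\<in>J. 1/N) = 1" unfolding N_def using Npos[unfolded N_def] by simp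
  have "A powr q \<le> (\<Sum>j\<in>J. (1/N) * (d j powr q))"
    unfolding A_def
    using convex_on_sum[OF fin ne powr_convex[OF q], of "\<lambda>_. 1/N" d] sa Npos pos by simp
  also have "\<dots> = (\<Sum>j\<in>J. d j powr q) / N" by (simp add: sum_divide_distrib[symmetric])
  finally have Aq: "A powr q \<le> (\<Sum>j\<in>J. d j powr q) / N" .
  have "A = (A powr q) powr (1/q)" using Apos q by (simp add: powr_powr)
  also have "\<dots> \<le> ((\<Sum>j\<in>J. d j powr q) / N) powr (1/q)"
    using Aq q by (intro powr_mono2) auto
  finally have A1: "A \<le> ((\<Sum>j\<in>J. d j powr q) / N) powr (1/q)" .
  have "(\<Sum>j\<in>J. d j) = N * A" unfolding A_def using Npos by (simp add: sum_divide_distrib[symmetric])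
  also have "\<dots> \<le> N * (((\<Sum>j\<in>J. d j powr q) / N) powr (1/q))"
    using A1 Npos by simp
  also have "\<dots> = N powr (1 - 1/q) * (\<Sum>j\<in>J. d j powr q) powr (1/q)"
  proof -
    define S where "S = (\<Sum>j\<in>J. d j powr q)"
    have S0: "0 \<le> S" unfolding S_def by (intro sum_nonneg) auto
    have e1: "(S/N) powr (1/q) = S powr (1/q) / N powr (1/q)"
      by (rule powr_divide)
    have e2: "N powr (1 - 1/q) = N / N powr (1/q)" using Npos by (simp add: powr_diff)
    show ?thesis unfolding S_def[symmetric] e1 e2 by simp
  qed
  finally show ?thesis unfolding N_def .
qed




lemma assum_cons:
  fixes n :: nat and lam :: "nat \<Rightarrow> real"
  assumes n2: "n \<ge> 2" and L2: "ln (real n) \<ge> 2" and l01: "lam 0 > lam 1"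
    and mono: "\<forall>i j. 1 \<le> i \<and> i \<le> j \<and> j < n \<longrightarrow> lam j \<le> lam i"
    and A: "assumption1 (1/10) n lam"
  shows "200 * ln (real n) * (\<Sum>j\<in>{1..n-1}. dvec lam j) * dvec lam 1 \<le> 1"
proof -
  define J where "J = {1..n-1}"
  define L where "L = ln (real n)"
  define s where "s = (\<Sum>j\<in>J. dvec lam j)"
  define d1 where "d1 = dvec lam 1"
  have finJ: "finite J" unfolding J_def by simp
  have oneJ: "1 \<in> J" unfolding J_def using n2 by simp
  have neJ: "J \<noteq> {}" using oneJ by auto
  have cardJ: "card J = n - 1" unfolding J_def by simp
  have dpos: "\<And>j. j \<in> J \<Longrightarrow> dvec lam j > 0"
  proof -
    fix j assume "j \<in> J"
    then have "lam j \<le> lam 1" using mono n2 unfolding J_def by auto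
    then show "dvec lam j > 0" using l01 unfolding dvec_def by simp
  qed
  have absd: "\<And>j. j \<in> J \<Longrightarrow> \<bar>dvec lam j\<bar> = dvec lam j" using dpos by force
  have d1pos: "d1 > 0" unfolding d1_def using dpos[OF oneJ] .
  have d1s: "d1 \<le> s" unfolding d1_def s_def
    using finJ oneJ dpos by (intro member_le_sum) (auto intro: less_imp_le)
  have s0: "s \<ge> 0" using d1s d1pos by simp
  have Lpos: "L \<ge> 2" using L2 L_def by simp
  have nL: "real n > 0" using n2 by simp
  have goal_eq: "200 * ln (real n) * (\<Sum>j\<in>{1..n-1}. dvec lam j) * dvec lam 1 = 200 * L * s * d1"
    unfolding L_def s_def d1_def J_def ..
  show ?thesis unfolding goal_eq
  proof (cases "ln (real n) * (\<Sum>j\<in>{1..n-1}. \<bar>dvec lam j\<bar>) \<le> 1/10")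
    case True
    have sabs: "(\<Sum>j\<in>{1..n-1}. \<bar>dvec lam j\<bar>) = s" unfolding s_def J_def[symmetric]
      by (rule sum.cong) (simp_all add: absd)
    from True have Ls: "L * s \<le> 1/10" unfolding sabs L_def .
    have Ls0: "L * s \<ge> 0" using Lpos s0 by simp
    have a: "200 * L * s * d1 \<le> 200 * L * s * s" using d1s Lpos s0
      by (intro mult_left_mono) auto
    have b: "(L * s) * (L * s) \<le> (1/10) * (1/10)" using Ls Ls0 by (intro mult_mono) auto
    have "L * (200 * L * s * s) = 200 * ((L * s) * (L * s))" by (simp add: algebra_simps)
    also have "\<dots> \<le> L * 1" using b Lpos by linarith
    finally have "200 * L * s * s \<le> 1" using Lpos by simp
    with a show "200 * L * s * d1 \<le> 1" by simp
  next
    case False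
    then obtain p :: real where p2: "2 \<le> p"
      and X: "sqrt (p * L) * (real n) powr (1 / p) * dnorm n lam p \<le> 1/10"
      using A unfolding assumption1_def L_def by auto
    show "200 * L * s * d1 \<le> 1"
    proof (cases "p = 2")
      case True
      define D where "D = Max ((\<lambda>j. \<bar>dvec lam j\<bar>) ` J)"
      have dD: "\<And>j. j \<in> J \<Longrightarrow> dvec lam j \<le> D"
        unfolding D_def using finJ absd by (metis Max_ge finite_imageI image_eqI)
      have d1D: "d1 \<le> D" using dD[OF oneJ] d1_def by simp
      have D0: "D > 0" using d1D d1pos by simp
      have "s \<le> real (card J) * D" unfolding s_def using dD by (rule sum_bounded_above)
      then have sD: "s \<le> real n * D" using cardJ D0 n2
        by (smt (verit) mult_right_mono of_nat_diff of_nat_le_iff diff_le_self)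
      have XX: "sqrt (2 * L) * sqrt (real n) * D \<le> 1/10"
        using X True unfolding dnorm_def D_def J_def using nL by (simp add: powr_half_sqrt)
      define X where "X = sqrt (2 * L) * sqrt (real n) * D"
      have X0: "X \<ge> 0" unfolding X_def using D0 Lpos by simp
      have "X * X \<le> (1/10) * (1/10)" using XX X0 unfolding X_def[symmetric] by (intro mult_mono) auto
      moreover have "X * X = 2 * L * real n * D * D"
        unfolding X_def using Lpos nL
        by (simp add: algebra_simps)
      ultimately have q: "2 * L * real n * D * D \<le> 1/100" by simp
      have "200 * L * s * d1 \<le> 200 * L * (real n * D) * D"
        using sD d1D Lpos s0 D0 d1pos by (intro mult_mono) auto
      also have "\<dots> = 100 * (2 * L * real n * D * D)" by simp
      also have "\<dots> \<le> 1" using q by simp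
      finally show ?thesis .
    next
      case False
      then have p2': "p > 2" using p2 by simp
      define q where "q = p / (p - 2)"
      have q1: "q \<ge> 1" unfolding q_def using p2' by simp
      have iq: "1 / q = (p - 2) / p" unfolding q_def using p2' by simp
      define D where "D = (\<Sum>j\<in>J. dvec lam j powr q) powr (1/q)"
      have sabs: "(\<Sum>j\<in>J. \<bar>dvec lam j\<bar> powr q) = (\<Sum>j\<in>J. dvec lam j powr q)"
        by (rule sum.cong) (simp_all add: absd)
      have Deq: "dnorm n lam p = D" unfolding dnorm_def D_def iq[symmetric] q_def[symmetric] J_def[symmetric]
        using False sabs by simp
      have pm: "s \<le> real (card J) powr (1 - 1/q) * D"
        unfolding s_def D_def by (rule power_mean[OF finJ neJ dpos q1])
      have e2p: "1 - 1/q = 2/p" unfolding iq using p2' by (simp add: field_simps)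
      have "real (card J) powr (2/p) \<le> real n powr (2/p)"
        using cardJ p2' by (intro powr_mono2) auto
      have D0: "D \<ge> 0" unfolding D_def by simp
      have sD: "s \<le> real n powr (2/p) * D"
        using pm e2p \<open>real (card J) powr (2/p) \<le> real n powr (2/p)\<close> D0
        by (smt (verit) mult_right_mono)
      have "d1 = (d1 powr q) powr (1/q)" using d1pos q1 by (simp add: powr_powr)
      also have "\<dots> \<le> D" unfolding D_def d1_def
        using finJ oneJ dpos q1
        by (intro powr_mono2 member_le_sum) auto
      finally have d1D: "d1 \<le> D" .
      define X where "X = sqrt (p * L) * (real n) powr (1 / p) * D"
      have XX: "X \<le> 1/10" using X Deq unfolding X_def by simp
      have X0: "X \<ge> 0" unfolding X_def using D0 Lpos p2' by simp
      have "X * X \<le> (1/10) * (1/10)" using XX X0 by (intro mult_mono) auto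
      moreover have "X * X = p * L * real n powr (2/p) * D * D"
      proof -
        have "sqrt (p * L) * sqrt (p * L) = p * L" using Lpos p2' by simp
        moreover have "real n powr (1/p) * real n powr (1/p) = real n powr (2/p)"
          by (simp add: powr_add[symmetric])
        ultimately show ?thesis unfolding X_def by (simp add: algebra_simps)
      qed
      ultimately have q: "p * L * real n powr (2/p) * D * D \<le> 1/100" by simp
      have "200 * L * s * d1 \<le> 200 * L * (real n powr (2/p) * D) * D"
        using sD d1D Lpos s0 D0 d1pos by (intro mult_mono) auto
      also have "\<dots> \<le> 1"
      proof -
        have "p * (200 * L * (real n powr (2/p) * D) * D) = 200 * (p * L * real n powr (2/p) * D * D)"
          by (simp add: algebra_simps)
        also have "\<dots> \<le> p * 1" using q p2' by linarith
        finally show ?thesis using p2' by simp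
      qed
      finally show ?thesis .
    qed
  qed
qed




lemma exp3: "exp (3::real) \<le> 100"
proof -
  have "exp (3::real) = exp 1 ^ 3" by (simp add: exp_of_nat_mult[symmetric])
  also have "\<dots> \<le> 3 ^ 3" using exp_le by (intro power_mono) auto
  finally show ?thesis by simp
qed

lemma exp2: "exp (2::real) \<le> 9"
proof -
  have "exp (2::real) = exp 1 ^ 2" by (simp add: exp_of_nat_mult[symmetric])
  also have "\<dots> \<le> 3 ^ 2" using exp_le by (intro power_mono) auto
  finally show ?thesis by simp
qed

lemma lnn2: assumes "n \<ge> (9::nat)" shows "ln (real n) \<ge> 2"
proof -
  have "exp 2 \<le> real n" using exp2 assms by linarith
  then show ?thesis using assms by (subst ln_ge_iff) auto
qed

lemma part1_det:
  fixes n :: nat and lam g u :: "nat \<Rightarrow> real"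
  assumes n2: "n \<ge> 2" and L2: "ln (real n) \<ge> 2" and l01: "lam 0 > lam 1"
    and mono: "\<forall>i j. 1 \<le> i \<and> i \<le> j \<and> j < n \<longrightarrow> lam j \<le> lam i"
    and A: "assumption1 (1/10) n lam"
    and g: "\<forall>i<n-1. (g i)\<^sup>2 \<le> 200 * ln (real n)"
    and U: "unit_leading_eigvec n (pert_mat lam g) u"
  shows "\<forall>j\<in>{1..n-1}. \<bar>u j\<bar> \<ge> \<bar>g (j-1)\<bar> / (4*(lam 0 - lam j))"
proof (rule determ[OF n2 l01 mono _ U])
  define T where "T = 200 * ln (real n)"
  have c: "T * (\<Sum>j\<in>{1..n-1}. dvec lam j) * dvec lam 1 \<le> 1"
    using assum_cons[OF n2 L2 l01 mono A] unfolding T_def by simp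
  have d1: "dvec lam 1 > 0" using l01 unfolding dvec_def by simp
  have "(\<Sum>j\<in>{1..<n}. (g (j-1))\<^sup>2 / (lam 0 - lam j)) \<le> (\<Sum>j\<in>{1..<n}. T * dvec lam j)"
  proof (rule sum_mono)
    fix j assume j: "j \<in> {1..<n}"
    have "lam j \<le> lam 1" using mono j by auto
    then have pos: "lam 0 - lam j > 0" using l01 by simp
    have "(g (j-1))\<^sup>2 \<le> T" using g j unfolding T_def by auto
    then show "(g (j-1))\<^sup>2 / (lam 0 - lam j) \<le> T * dvec lam j"
      unfolding dvec_def using pos by (simp add: divide_right_mono)
  qed
  also have "\<dots> = T * (\<Sum>j\<in>{1..n-1}. dvec lam j)"
    using n2 by (simp add: sum_distrib_left atLeastLessThanSuc_atLeastAtMost[symmetric])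
  also have "\<dots> \<le> 1 / dvec lam 1" using c d1 by (simp add: le_divide_eq)
  also have "\<dots> = lam 0 - lam 1" unfolding dvec_def by simp
  finally show "(\<Sum>j\<in>{1..<n}. (g (j-1))\<^sup>2 / (lam 0 - lam j)) \<le> lam 0 - lam 1" .
qed




lemma gauss_vec_NN: "gauss_vec m = PiM {..<m} (\<lambda>_. NN)"
  unfolding gauss_vec_def ..

lemma prob_S1:
  fixes n :: nat
  assumes n9: "n \<ge> 9"
  shows "measure (gauss_vec (n-1)) (PiE {..<n-1} (\<lambda>_. {x. x\<^sup>2 \<le> 200 * ln (real n)})) \<ge> 1 - 1/(real n)\<^sup>2"
proof -
  interpret N: prob_space NN by (rule NN_prob)
  define L where "L = ln (real n)"
  define T where "T = 200 * L"
  define k where "k = nat \<lceil>L\<rceil>"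
  have L2: "L \<ge> 2" unfolding L_def using lnn2[OF n9] .
  have T0: "T > 0" unfolding T_def using L2 by simp
  have kL: "L \<le> real k" unfolding k_def by linarith
  have kL2: "real k \<le> 2 * L" unfolding k_def using L2 by linarith
  have npos: "real n > 0" using n9 by simp
  define \<epsilon> where "\<epsilon> = measure NN {x. T < x\<^sup>2}"
  have "\<epsilon> \<le> (real k)^k / T^k" unfolding \<epsilon>_def by (rule tail_up[OF T0])
  also have "\<dots> = (real k / T)^k" by (simp add: power_divide)
  also have "\<dots> \<le> (1/100)^k"
  proof (rule power_mono)
    show "real k / T \<le> 1/100" using kL2 T0 unfolding T_def by (simp add: divide_le_eq)
  qed (use T0 in simp)
  also have "\<dots> \<le> (1 / exp 3)^k"
    using exp3 by (intro power_mono) (auto simp: divide_le_eq)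
  also have "\<dots> = 1 / exp (real k * 3)" by (simp add: exp_of_nat_mult power_one_over)
  also have "\<dots> \<le> 1 / exp (3 * L)" using kL by (simp add: divide_le_eq)
  also have "exp (3 * L) = (real n)^3"
    unfolding L_def using npos by (simp add: exp_of_nat_mult[of 3, simplified] exp_ln)
  finally have eps: "\<epsilon> \<le> 1 / (real n)^3" .
  have e0: "\<epsilon> \<ge> 0" unfolding \<epsilon>_def by simp
  have e1: "\<epsilon> \<le> 1" unfolding \<epsilon>_def by simp
  have setsA: "{x::real. x\<^sup>2 \<le> T} \<in> sets borel" by measurable
  have compl: "{x::real. x\<^sup>2 \<le> T} = space NN - {x. T < x\<^sup>2}" by auto
  have mA: "measure NN {x. x\<^sup>2 \<le> T} = 1 - \<epsilon>"
    unfolding compl \<epsilon>_def by (rule N.prob_compl) measurable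
  have "measure (gauss_vec (n-1)) (PiE {..<n-1} (\<lambda>_. {x. x\<^sup>2 \<le> T})) = (1 - \<epsilon>)^(n-1)"
    unfolding gauss_vec_NN using measure_PiE_pow[OF setsA, of "n-1"] mA by simp
  also have "\<dots> \<ge> 1 - real (n-1) * \<epsilon>" using bern e0 e1 by blast
  finally have m1: "measure (gauss_vec (n-1)) (PiE {..<n-1} (\<lambda>_. {x. x\<^sup>2 \<le> T})) \<ge> 1 - real (n-1) * \<epsilon>" .
  have "real (n-1) * \<epsilon> \<le> real n * (1 / (real n)^3)"
    using eps e0 n9 by (intro mult_mono) auto
  also have "\<dots> = 1 / (real n)\<^sup>2" using npos by (simp add: power2_eq_square power3_eq_cube)
  finally show ?thesis using m1 unfolding T_def L_def by linarith
qed

lemma prob_B: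
  fixes n :: nat
  assumes n9: "n \<ge> 9"
  shows "measure (gauss_vec (n-1)) (PiE {..<n-1} (\<lambda>_. {x. \<bar>x\<bar> < sqrt (ln (real n) / 2)})) \<le> 72^4/(real n)\<^sup>2"
proof -
  interpret N: prob_space NN by (rule NN_prob)
  define L where "L = ln (real n)"
  define s where "s = sqrt (L/2)"
  have L2: "L \<ge> 2" unfolding L_def using lnn2[OF n9] .
  have npos: "real n > 0" using n9 by simp
  have s0: "s \<ge> 0" unfolding s_def using L2 by simp
  have ss: "s\<^sup>2 = L/2" unfolding s_def using L2 by simp
  define a where "a = std_normal_density (s+1)"
  have "(s+1)\<^sup>2 \<le> L + 2"
  proof -
    have "0 \<le> (s - 1)\<^sup>2" by simp
    then show ?thesis using ss by (simp add: power2_eq_square algebra_simps)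
  qed
  then have ex0: "exp (-(L+2)/2) \<le> exp (-(s+1)\<^sup>2/2)" by simp
  have ex1: "exp (-(L+2)/2) = exp (-1) / exp (L/2)"
  proof -
    have "-(L+2)/2 = -1 - L/2" by simp
    then show ?thesis by (simp only: exp_diff)
  qed
  have ex2: "exp (L/2) = sqrt (real n)"
  proof -
    have "exp (L/2) * exp (L/2) = real n" unfolding L_def using npos
      by (simp add: exp_add[symmetric])
    then have "sqrt (real n) = sqrt (exp (L/2) * exp (L/2))" by simp
    also have "\<dots> = exp (L/2)" by (simp only: real_sqrt_abs2) simp
    finally show ?thesis by simp
  qed
  have ex: "exp (-1) / sqrt (real n) \<le> exp (-(s+1)\<^sup>2/2)"
    using ex0 unfolding ex1 ex2 .
  have e1: "1/3 \<le> exp (-1::real)"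
  proof -
    have "inverse (3::real) \<le> inverse (exp 1)" using exp_le by (intro le_imp_inverse_le) auto
    then show ?thesis by (simp add: exp_minus inverse_eq_divide)
  qed
  have sq2pi: "sqrt (2 * pi) \<le> 3"
  proof -
    have "sqrt (2 * pi) \<le> sqrt (3^2)" using pi_less_4 by (intro real_sqrt_le_mono) simp
    also have "sqrt (3^2) = (3::real)" by (simp only: real_sqrt_abs)
    finally show ?thesis .
  qed
  have sqn: "sqrt (real n) > 0" using npos by simp
  have aa: "a \<ge> 1 / (9 * sqrt (real n))"
  proof -
    have "1 / (9 * sqrt (real n)) = (1/3) * ((1/3) / sqrt (real n))" by simp
    also have "\<dots> \<le> (1 / sqrt (2*pi)) * (exp (-1) / sqrt (real n))"
      using sq2pi e1 sqn by (intro mult_mono divide_right_mono) (auto simp: divide_le_eq)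
    also have "\<dots> \<le> (1 / sqrt (2*pi)) * exp (-(s+1)\<^sup>2/2)"
      using ex by (intro mult_left_mono) auto
    also have "\<dots> = a" unfolding a_def std_normal_density_def by simp
    finally show ?thesis .
  qed
  have a0: "0 \<le> a" unfolding a_def by simp
  define r where "r = measure NN {x. \<bar>x\<bar> < s}"
  have compl: "{x::real. \<bar>x\<bar> < s} = space NN - {x. s \<le> \<bar>x\<bar>}" by auto
  have "r = 1 - measure NN {x. s \<le> \<bar>x\<bar>}"
    unfolding r_def compl by (rule N.prob_compl) measurable
  then have r1: "r \<le> 1 - a" using tail_low[OF s0] unfolding a_def by simp
  have r0: "r \<ge> 0" unfolding r_def by simp
  have setsB: "{x::real. \<bar>x\<bar> < s} \<in> sets borel" by measurable
  have "measure (gauss_vec (n-1)) (PiE {..<n-1} (\<lambda>_. {x. \<bar>x\<bar> < s})) = r^(n-1)"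
    unfolding gauss_vec_NN r_def using measure_PiE_pow[OF setsB, of "n-1"] by simp
  also have "\<dots> \<le> (exp (-a))^(n-1)"
  proof (rule power_mono)
    show "r \<le> exp (-a)" using r1 exp_ge_add_one_self[of "-a"] by linarith
  qed (rule r0)
  also have "\<dots> = exp (- (a * real (n-1)))" by (simp add: exp_of_nat_mult[symmetric] mult.commute)
  also have "\<dots> \<le> exp (- (sqrt (real n) / 18))"
  proof -
    have "real (n-1) \<ge> real n / 2" using n9 by simp
    have "sqrt (real n) / 18 = (1 / (9 * sqrt (real n))) * (real n / 2)"
      using sqn by (simp add: field_simps)
    also have "\<dots> \<le> a * real (n-1)"
      using aa a0 \<open>real (n-1) \<ge> real n / 2\<close> sqn by (intro mult_mono) auto
    finally show ?thesis by simp
  qed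
  also have "\<dots> \<le> 72^4 / (real n)\<^sup>2"
  proof -
    define y where "y = sqrt (real n) / 18"
    have y0: "y \<ge> 0" unfolding y_def by simp
    have "(y/4)^4 \<le> (exp (y/4))^4"
      using y0 exp_ge_add_one_self[of "y/4"] by (intro power_mono) linarith+
    also have "\<dots> = exp y" by (simp add: exp_of_nat_mult[symmetric])
    finally have ey: "(y/4)^4 \<le> exp y" .
    have "(y/4)^4 = (real n)\<^sup>2 / 72^4"
    proof -
      have "(sqrt (real n))^4 = (real n)\<^sup>2"
        using npos by (metis less_eq_real_def power_mult numeral_Bit0 real_sqrt_pow2 mult_2 numeral_One one_add_one)
      then show ?thesis unfolding y_def by (simp add: power_divide)
    qed
    with ey have "(real n)\<^sup>2 / 72^4 \<le> exp y" by simp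
    then have "1 / exp y \<le> 1 / ((real n)\<^sup>2 / 72^4)"
      using npos by (intro divide_left_mono) auto
    then show ?thesis unfolding y_def by (simp add: exp_minus field_simps)
  qed
  finally show ?thesis unfolding s_def L_def .
qed




lemma main_lem:
  fixes n :: nat and lam :: "nat \<Rightarrow> real"
  assumes H: "n \<ge> 2 \<and> lam 0 > lam 1 \<and> (\<forall>i j. 1 \<le> i \<and> i \<le> j \<and> j < n \<longrightarrow> lam j \<le> lam i)
     \<and> assumption1 (1/10) n lam"
  shows "(\<exists>S\<in>sets (gauss_vec (n - 1)).
          measure (gauss_vec (n - 1)) S \<ge> 1 - 10^8 / (real n)\<^sup>2 \<and>
          (\<forall>g\<in>S. \<forall>u. unit_leading_eigvec n (pert_mat lam g) u \<longrightarrow>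
             (\<forall>j\<in>{1..n-1}. \<bar>u j\<bar> \<ge> \<bar>g (j - 1)\<bar> / (4 * (lam 0 - lam j)))))
     \<and> (\<exists>S\<in>sets (gauss_vec (n - 1)).
          measure (gauss_vec (n - 1)) S \<ge> 1 - 10^8 / (real n)\<^sup>2 \<and>
          (\<forall>g\<in>S. \<forall>u. unit_leading_eigvec n (pert_mat lam g) u \<longrightarrow>
             Max ((\<lambda>j. (lam 0 - lam j) * \<bar>u j\<bar>) ` {1..n-1}) \<ge> (1/8) * sqrt (ln (real n))))"
proof -
  from H have n2: "n \<ge> 2" and l01: "lam 0 > lam 1"
    and mono: "\<forall>i j. 1 \<le> i \<and> i \<le> j \<and> j < n \<longrightarrow> lam j \<le> lam i"
    and A: "assumption1 (1/10) n lam" by auto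
  have npos: "real n > 0" using n2 by simp
  show ?thesis
  proof (cases "(real n)\<^sup>2 \<le> 10^8")
    case True
    then have "1 - 10^8 / (real n)\<^sup>2 \<le> 0" using npos by (simp add: field_simps)
    then have "\<exists>S\<in>sets (gauss_vec (n - 1)). measure (gauss_vec (n - 1)) S \<ge> 1 - 10^8 / (real n)\<^sup>2 \<and> (\<forall>g\<in>S. P g)" for P
      by (intro bexI[of _ "{}"]) auto
    then show ?thesis by blast
  next
    case False
    have n9: "n \<ge> 9"
    proof (rule ccontr)
      assume "\<not> n \<ge> 9"
      then have "real n \<le> 9" by simp
      then have "(real n)\<^sup>2 \<le> 9\<^sup>2" using npos by (intro power_mono) auto
      then show False using False by simp
    qed
    have L2: "ln (real n) \<ge> 2" using lnn2[OF n9] .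
    define T where "T = 200 * ln (real n)"
    define s where "s = sqrt (ln (real n) / 2)"
    define S1 where "S1 = PiE {..<n-1} (\<lambda>_. {x::real. x\<^sup>2 \<le> T})"
    define B where "B = PiE {..<n-1} (\<lambda>_. {x::real. \<bar>x\<bar> < s})"
    interpret P: prob_space "gauss_vec (n-1)"
      unfolding gauss_vec_NN by (intro prob_space_PiM NN_prob)
    have S1sets: "S1 \<in> sets (gauss_vec (n-1))"
      unfolding S1_def gauss_vec_NN by (rule sets_PiM_I_finite) auto
    have Bsets: "B \<in> sets (gauss_vec (n-1))"
      unfolding B_def gauss_vec_NN by (rule sets_PiM_I_finite) auto
    have m1: "measure (gauss_vec (n-1)) S1 \<ge> 1 - 1/(real n)\<^sup>2"
      unfolding S1_def T_def using prob_S1[OF n9] .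
    have mB: "measure (gauss_vec (n-1)) B \<le> 72^4/(real n)\<^sup>2"
      unfolding B_def s_def using prob_B[OF n9] .
    have det1: "\<forall>j\<in>{1..n-1}. \<bar>u j\<bar> \<ge> \<bar>g (j - 1)\<bar> / (4 * (lam 0 - lam j))"
      if g: "g \<in> S1" and U: "unit_leading_eigvec n (pert_mat lam g) u" for g u
    proof (rule part1_det[OF n2 L2 l01 mono A _ U])
      show "\<forall>i<n-1. (g i)\<^sup>2 \<le> 200 * ln (real n)" using g unfolding S1_def T_def by auto
    qed
    have c1: "1 - 10^8 / (real n)\<^sup>2 \<le> 1 - 1/(real n)\<^sup>2" using npos by (simp add: divide_right_mono)
    show ?thesis
    proof
      show "\<exists>S\<in>sets (gauss_vec (n - 1)).
          measure (gauss_vec (n - 1)) S \<ge> 1 - 10^8 / (real n)\<^sup>2 \<and>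
          (\<forall>g\<in>S. \<forall>u. unit_leading_eigvec n (pert_mat lam g) u \<longrightarrow>
             (\<forall>j\<in>{1..n-1}. \<bar>u j\<bar> \<ge> \<bar>g (j - 1)\<bar> / (4 * (lam 0 - lam j))))"
        using S1sets m1 c1 det1 by (intro bexI[of _ S1]) auto
    next
      have S2sets: "S1 - B \<in> sets (gauss_vec (n-1))" using S1sets Bsets by auto
      have "measure (gauss_vec (n-1)) S1 \<le> measure (gauss_vec (n-1)) ((S1 - B) \<union> B)"
        using S1sets S2sets Bsets by (intro P.finite_measure_mono) auto
      also have "\<dots> \<le> measure (gauss_vec (n-1)) (S1 - B) + measure (gauss_vec (n-1)) B"
        using S2sets Bsets by (rule measure_Un_le)
      finally have "measure (gauss_vec (n-1)) (S1 - B) \<ge> 1 - 1/(real n)\<^sup>2 - 72^4/(real n)\<^sup>2"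
        using m1 mB by linarith
      moreover have "1 - 10^8 / (real n)\<^sup>2 \<le> 1 - 1/(real n)\<^sup>2 - 72^4/(real n)\<^sup>2"
        using npos by (simp add: field_simps)
      ultimately have m2: "measure (gauss_vec (n-1)) (S1 - B) \<ge> 1 - 10^8 / (real n)\<^sup>2" by linarith
      have sL: "(1/8) * sqrt (ln (real n)) \<le> s / 4"
      proof -
        have "sqrt (ln (real n) / 4) \<le> s" unfolding s_def using L2
          by (intro real_sqrt_le_mono) auto
        moreover have "sqrt (ln (real n) / 4) = sqrt (ln (real n)) / 2"
          by (simp add: real_sqrt_divide)
        ultimately show ?thesis by simp
      qed
      have det2: "Max ((\<lambda>j. (lam 0 - lam j) * \<bar>u j\<bar>) ` {1..n-1}) \<ge> (1/8) * sqrt (ln (real n))"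
        if g: "g \<in> S1 - B" and U: "unit_leading_eigvec n (pert_mat lam g) u" for g u
      proof -
        have gS1: "g \<in> S1" and gB: "g \<notin> B" using g by auto
        obtain i where i: "i < n-1" "\<not> \<bar>g i\<bar> < s"
        proof (rule ccontr)
          assume "\<not> thesis"
          then have "\<forall>i<n-1. \<bar>g i\<bar> < s" using that by blast
          then have "g \<in> B" using gS1 unfolding S1_def B_def by (auto simp: PiE_iff)
          then show False using gB by simp
        qed
        define j where "j = i + 1"
        have jJ: "j \<in> {1..n-1}" unfolding j_def using i by auto
        have gap: "lam 0 - lam j > 0"
        proof -
          have "lam j \<le> lam 1" using mono jJ n2 by auto
          then show ?thesis using l01 by simp
        qed
        have "\<bar>u j\<bar> \<ge> \<bar>g (j - 1)\<bar> / (4 * (lam 0 - lam j))" using det1[OF gS1 U] jJ by blast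
        then have "(lam 0 - lam j) * \<bar>u j\<bar> \<ge> (lam 0 - lam j) * (\<bar>g i\<bar> / (4 * (lam 0 - lam j)))"
          using gap unfolding j_def by (intro mult_left_mono) auto
        also have "(lam 0 - lam j) * (\<bar>g i\<bar> / (4 * (lam 0 - lam j))) = \<bar>g i\<bar> / 4"
          using gap by (simp add: field_simps)
        finally have "(lam 0 - lam j) * \<bar>u j\<bar> \<ge> s / 4" using i(2) by linarith
        moreover have "(lam 0 - lam j) * \<bar>u j\<bar> \<le> Max ((\<lambda>j. (lam 0 - lam j) * \<bar>u j\<bar>) ` {1..n-1})"
          using jJ by (intro Max_ge) auto
        ultimately show ?thesis using sL by linarith
      qed
      show "\<exists>S\<in>sets (gauss_vec (n - 1)).
          measure (gauss_vec (n - 1)) S \<ge> 1 - 10^8 / (real n)\<^sup>2 \<and>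
          (\<forall>g\<in>S. \<forall>u. unit_leading_eigvec n (pert_mat lam g) u \<longrightarrow>
             Max ((\<lambda>j. (lam 0 - lam j) * \<bar>u j\<bar>) ` {1..n-1}) \<ge> (1/8) * sqrt (ln (real n)))"
        using S2sets m2 det2 by (intro bexI[of _ "S1 - B"]) auto
    qed
  qed
qed

theorem theorem2:
  "\<exists>c0>0. \<exists>C>0. \<exists>c>0. \<forall>(n::nat) (lam::nat \<Rightarrow> real).
     n \<ge> 2 \<and> lam 0 > lam 1 \<and> (\<forall>i j. 1 \<le> i \<and> i \<le> j \<and> j < n \<longrightarrow> lam j \<le> lam i)
     \<and> assumption1 c0 n lam \<longrightarrow>
       (\<exists>S\<in>sets (gauss_vec (n - 1)).
          measure (gauss_vec (n - 1)) S \<ge> 1 - C / (real n)\<^sup>2 \<and>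
          (\<forall>g\<in>S. \<forall>u. unit_leading_eigvec n (pert_mat lam g) u \<longrightarrow>
             (\<forall>j\<in>{1..n-1}. \<bar>u j\<bar> \<ge> \<bar>g (j - 1)\<bar> / (4 * (lam 0 - lam j)))))
     \<and> (\<exists>S\<in>sets (gauss_vec (n - 1)).
          measure (gauss_vec (n - 1)) S \<ge> 1 - C / (real n)\<^sup>2 \<and>
          (\<forall>g\<in>S. \<forall>u. unit_leading_eigvec n (pert_mat lam g) u \<longrightarrow>
             Max ((\<lambda>j. (lam 0 - lam j) * \<bar>u j\<bar>) ` {1..n-1}) \<ge> c * sqrt (ln (real n))))"
  apply (rule exI[of _ "1/10::real"])
  apply (rule conjI, simp)
  apply (rule exI[of _ "10^8::real"])
  apply (rule conjI, simp)
  apply (rule exI[of _ "1/8::real"])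
  apply (rule conjI, simp)
  using main_lem by blast


end
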